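(* Let $A$ be a linear Nakayama algebra with simple modules $S_0,\dots,S_{n-1}$, Kupisch series $[c_0,\dots,c_{n-1}]$ and Jacobson radical $J$, and let $d_j=\dim_K D(Ae_j)$. Let $0\le s\le n-2$ and $1\le t\le c_s-1$. Then the module $e_sJ^t$ has injective dimension at most one if and only if $d_{s+c_s-1}-c_s+t=d_{s+t-1}$, and in this case its injective dimension equals one. In particular, $e_sJ$ has injective dimension at most one if and only if $d_{s+c_s-1}-c_s+1=d_s$.
   Context: $K$ is a field; a linear Nakayama algebra with $n$ simple modules is a connected algebra $A=KQ/I$ with $Q$ the quiver $0\to1\to\cdots\to n-1$ and $I$ admissible; modules are finite-dimensional right modules. $e_iA$ is uniserial with composition factors $S_i,\dots,S_{i+c_i-1}$ from top to socle, $c_i=\dim_K e_iA$. $D=\operatorname{Hom}_K(-,K)$ and $D(Ae_j)$ is the injective envelope of $S_j$. *)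

theory Defs
  imports "Jordan_Normal_Form.Matrix"
begin

text \<open>
  Linear Nakayama algebra A = KQ/I, Q = 0 -> 1 -> ... -> n-1, given by its Kupisch series
  c_0,...,c_{n-1} (c_i = dim e_i A).  Every admissible ideal of KQ for this quiver is generated
  by the paths of length c_i starting at i, so A is determined by (n, c).
  Finite-dimensional right A-modules are represented as quiver representations:
  a K-space K^(rdim M j) at each vertex j < n and a matrix rmap M j : K^(rdim M j) -> K^(rdim M (j+1))
  for the arrow j -> j+1, subject to the relations of I.
\<close>

definition kupisch_linear :: "nat \<Rightarrow> (nat \<Rightarrow> nat) \<Rightarrow> bool" where
  "kupisch_linear n c \<longleftrightarrow> n \<ge> 1 \<and> c (n - 1) = 1 \<and>
     (\<forall>i. i + 1 < n \<longrightarrow> c i \<ge> 2 \<and> c i \<le> c (i + 1) + 1)"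

record 'k rep =
  rdim :: "nat \<Rightarrow> nat"
  rmap :: "nat \<Rightarrow> 'k mat"

fun pathmat :: "'k::field rep \<Rightarrow> nat \<Rightarrow> nat \<Rightarrow> 'k mat" where
  "pathmat M i 0 = 1\<^sub>m (rdim M i)"
| "pathmat M i (Suc l) = rmap M (i + l) * pathmat M i l"

definition valid_rep :: "nat \<Rightarrow> (nat \<Rightarrow> nat) \<Rightarrow> 'k::field rep \<Rightarrow> bool" where
  "valid_rep n c M \<longleftrightarrow>
     (\<forall>j. j \<ge> n \<longrightarrow> rdim M j = 0) \<and>
     (\<forall>j. j + 1 < n \<longrightarrow> rmap M j \<in> carrier_mat (rdim M (j + 1)) (rdim M j)) \<and>
     (\<forall>i. i < n \<longrightarrow> i + c i < n \<longrightarrow> pathmat M i (c i) = 0\<^sub>m (rdim M (i + c i)) (rdim M i))"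

definition is_hom :: "nat \<Rightarrow> 'k::field rep \<Rightarrow> 'k rep \<Rightarrow> (nat \<Rightarrow> 'k mat) \<Rightarrow> bool" where
  "is_hom n M N f \<longleftrightarrow>
     (\<forall>j < n. f j \<in> carrier_mat (rdim N j) (rdim M j)) \<and>
     (\<forall>j. j + 1 < n \<longrightarrow> rmap N j * f j = f (j + 1) * rmap M j)"

definition is_mono :: "nat \<Rightarrow> 'k::field rep \<Rightarrow> (nat \<Rightarrow> 'k mat) \<Rightarrow> bool" where
  "is_mono n M f \<longleftrightarrow>
     (\<forall>j < n. \<forall>v \<in> carrier_vec (rdim M j). f j *\<^sub>v v = 0\<^sub>v (dim_row (f j)) \<longrightarrow> v = 0\<^sub>v (rdim M j))"

definition injective_module :: "nat \<Rightarrow> (nat \<Rightarrow> nat) \<Rightarrow> 'k::field rep \<Rightarrow> bool" where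
  "injective_module n c E \<longleftrightarrow> valid_rep n c E \<and>
     (\<forall>X Y f g. valid_rep n c X \<longrightarrow> valid_rep n c Y \<longrightarrow> is_hom n X Y f \<longrightarrow> is_mono n X f \<longrightarrow>
        is_hom n X E g \<longrightarrow> (\<exists>h. is_hom n Y E h \<and> (\<forall>j < n. h j * f j = g j)))"

text \<open>M has injective dimension at most m: there is an exact sequence
  0 -> M -> I_0 -> I_1 -> ... -> I_m -> 0 with all I_k injective.\<close>
definition injdim_le :: "nat \<Rightarrow> (nat \<Rightarrow> nat) \<Rightarrow> 'k::field rep \<Rightarrow> nat \<Rightarrow> bool" where
  "injdim_le n c M m \<longleftrightarrow>
     (\<exists>(I :: nat \<Rightarrow> 'k rep) \<epsilon> \<delta>.
        (\<forall>k \<le> m. injective_module n c (I k)) \<and>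
        is_hom n M (I 0) \<epsilon> \<and> is_mono n M \<epsilon> \<and>
        (\<forall>k < m. is_hom n (I k) (I (k + 1)) (\<delta> k)) \<and>
        (\<forall>k \<le> m. \<forall>j < n. \<forall>v \<in> carrier_vec (rdim (I k) j).
           ((k < m \<longrightarrow> \<delta> k j *\<^sub>v v = 0\<^sub>v (rdim (I (k + 1)) j)) \<longleftrightarrow>
            (if k = 0 then (\<exists>w \<in> carrier_vec (rdim M j). v = \<epsilon> j *\<^sub>v w)
             else (\<exists>w \<in> carrier_vec (rdim (I (k - 1)) j). v = \<delta> (k - 1) j *\<^sub>v w)))))"

text \<open>d_j = dim_K D(A e_j) = dim_K A e_j = number of nonzero paths of A ending at vertex j
  (the path i -> j, i \<le> j, is nonzero in A iff j - i < c_i).\<close>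
definition dual_dim :: "(nat \<Rightarrow> nat) \<Rightarrow> nat \<Rightarrow> nat" where
  "dual_dim c j = card {i. i \<le> j \<and> j < i + c i}"

text \<open>The module e_s J^t: e_s A is uniserial with basis the paths from s of length 0,...,c_s-1,
  and J^t is spanned by paths of length \<ge> t; so e_s J^t has K at vertices s+t,...,s+c_s-1 and
  identity maps between consecutive such vertices.\<close>
definition interval_rep :: "nat \<Rightarrow> nat \<Rightarrow> 'k::field rep" where
  "interval_rep a b = \<lparr> rdim = (\<lambda>j. if a \<le> j \<and> j \<le> b then 1 else 0),
      rmap = (\<lambda>j. if a \<le> j \<and> j + 1 \<le> b then 1\<^sub>m 1
                  else 0\<^sub>m (if a \<le> j + 1 \<and> j + 1 \<le> b then 1 else 0) (if a \<le> j \<and> j \<le> b then 1 else 0)) \<rparr>"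

definition eJpow :: "(nat \<Rightarrow> nat) \<Rightarrow> nat \<Rightarrow> nat \<Rightarrow> 'k::field rep" where
  "eJpow c s t = interval_rep (s + t) (s + c s - 1)"

end

theory Submission
  imports Defs "Jordan_Normal_Form.Gauss_Jordan_Elimination"
begin


definition dI :: "nat \<Rightarrow> nat \<Rightarrow> nat \<Rightarrow> nat" where
  "dI p q j = (if p \<le> j \<and> j \<le> q then 1 else 0)"

definition ones :: "nat \<Rightarrow> nat \<Rightarrow> 'k::field mat" where
  "ones r c = mat r c (\<lambda>_. 1)"

lemma ones_carrier[simp]: "ones r c \<in> carrier_mat r c"
  by (simp add: ones_def)

lemma ones_dims[simp]: "dim_row (ones r c) = r" "dim_col (ones r c) = c"
  by (simp_all add: ones_def)

lemma ones_mult: "ones r k * ones k c = (mat r c (\<lambda>_. of_nat k) :: 'k::field mat)"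
  by (rule eq_matI) (auto simp: ones_def scalar_prod_def)

lemma mat_eq_rows0: "A \<in> carrier_mat 0 m \<Longrightarrow> B \<in> carrier_mat 0 m \<Longrightarrow> A = B"
  by (rule eq_matI) auto

lemma mat_eq_cols0: "A \<in> carrier_mat m 0 \<Longrightarrow> B \<in> carrier_mat m 0 \<Longrightarrow> A = B"
  by (rule eq_matI) auto

lemma ones_11: "ones 1 1 = (1\<^sub>m 1 :: 'k::field mat)"
  by (rule eq_matI) (auto simp: ones_def)

lemma ones_zero: "r = 0 \<or> c = 0 \<Longrightarrow> ones r c = (0\<^sub>m r c :: 'k::field mat)"
  by (rule eq_matI) (auto simp: ones_def)

lemma rdim_IR[simp]: "rdim (interval_rep p q) j = dI p q j"
  by (simp add: interval_rep_def dI_def)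

lemma dI_le1: "dI p q j \<le> 1" by (simp add: dI_def)

lemma rmap_IR: "rmap (interval_rep p q) j = (ones (dI p q (j+1)) (dI p q j) :: 'k::field mat)"
proof (cases "p \<le> j \<and> j + 1 \<le> q")
  case True
  then show ?thesis by (intro eq_matI) (auto simp: interval_rep_def dI_def ones_def)
next
  case False
  then show ?thesis by (subst ones_zero) (auto simp: interval_rep_def dI_def)
qed

lemma pathmat_IR: "pathmat (interval_rep p q) i l = (ones (dI p q (i+l)) (dI p q i) :: 'k::field mat)"
proof (induction l)
  case 0
  show ?case by (rule eq_matI) (auto simp: ones_def dI_def split: if_splits)
next
  case (Suc l)
  show ?case
    by (simp add: Suc rmap_IR ones_mult, rule eq_matI) (auto simp: ones_def dI_def split: if_splits)
qed

lemma valid_IR: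
  assumes "q < n" "\<And>i. p \<le> i \<Longrightarrow> i \<le> q \<Longrightarrow> q < i + c i"
  shows "valid_rep n c (interval_rep p q :: 'k::field rep)"
  unfolding valid_rep_def
proof (intro conjI allI impI)
  fix j assume "n \<le> j" then show "rdim (interval_rep p q :: 'k rep) j = 0" using assms by (auto simp: dI_def)
next
  fix j show "rmap (interval_rep p q :: 'k rep) j \<in> carrier_mat (rdim (interval_rep p q :: 'k rep) (j + 1)) (rdim (interval_rep p q :: 'k rep) j)"
    by (simp add: rmap_IR)
next
  fix i assume "i < n" "i + c i < n"
  show "pathmat (interval_rep p q :: 'k rep) i (c i) = 0\<^sub>m (rdim (interval_rep p q :: 'k rep) (i + c i)) (rdim (interval_rep p q :: 'k rep) i)"
    using assms(2)[of i] by (simp add: pathmat_IR, subst ones_zero) (auto simp: dI_def)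
qed

lemma hom_IR:
  assumes "p' \<le> p" "q' \<le> q"
  shows "is_hom n (interval_rep p q) (interval_rep p' q') (\<lambda>j. ones (dI p' q' j) (dI p q j) :: 'k::field mat)"
  unfolding is_hom_def
  using assms by (auto simp: rmap_IR ones_mult intro!: eq_matI) (auto simp: dI_def split: if_splits)

lemma pathmat_carrier:
  assumes "valid_rep n c X" "i + l < n"
  shows "pathmat X i l \<in> carrier_mat (rdim X (i+l)) (rdim X i)"
  using assms(2)
proof (induction l)
  case 0 then show ?case by simp
next
  case (Suc l)
  have "rmap X (i+l) \<in> carrier_mat (rdim X (i+l+1)) (rdim X (i+l))"
    using assms(1) Suc.prems unfolding valid_rep_def by auto
  with Suc show ?case by auto
qed

lemma pathmat_add:
  assumes "valid_rep n c X" "i + l + m < n"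
  shows "pathmat X i (l + m) = pathmat X (i + l) m * pathmat X i l"
  using assms(2)
proof (induction m)
  case 0
  then show ?case using pathmat_carrier[OF assms(1), of i l] by simp
next
  case (Suc m)
  have r: "rmap X (i+l+m) \<in> carrier_mat (rdim X (i+l+m+1)) (rdim X (i+l+m))"
    using assms(1) Suc.prems unfolding valid_rep_def by auto
  have p1: "pathmat X (i+l) m \<in> carrier_mat (rdim X (i+l+m)) (rdim X (i+l))"
    using pathmat_carrier[OF assms(1), of "i+l" m] Suc.prems by simp
  have p2: "pathmat X i l \<in> carrier_mat (rdim X (i+l)) (rdim X i)"
    using pathmat_carrier[OF assms(1), of i l] Suc.prems by simp
  have "pathmat X i (l + Suc m) = rmap X (i+l+m) * pathmat X i (l + m)"
    by (simp add: add.assoc)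
  also have "\<dots> = rmap X (i+l+m) * (pathmat X (i + l) m * pathmat X i l)"
    using Suc by simp
  also have "\<dots> = (rmap X (i+l+m) * pathmat X (i + l) m) * pathmat X i l"
    using r p1 p2 by (simp add: assoc_mult_mat)
  finally show ?case by simp
qed

lemma hom_path:
  assumes X: "valid_rep n c X" and Y: "valid_rep n c Y" and f: "is_hom n X Y f" and "i + l < n"
  shows "pathmat Y i l * f i = f (i + l) * pathmat X i l"
  using assms(4)
proof (induction l)
  case 0
  have "f i \<in> carrier_mat (rdim Y i) (rdim X i)" using f 0 unfolding is_hom_def by auto
  then show ?case by simp
next
  case (Suc l)
  have rY: "rmap Y (i+l) \<in> carrier_mat (rdim Y (i+l+1)) (rdim Y (i+l))"
    using Y Suc.prems unfolding valid_rep_def by auto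
  have rX: "rmap X (i+l) \<in> carrier_mat (rdim X (i+l+1)) (rdim X (i+l))"
    using X Suc.prems unfolding valid_rep_def by auto
  have pX: "pathmat X i l \<in> carrier_mat (rdim X (i+l)) (rdim X i)"
    using pathmat_carrier[OF X, of i l] Suc.prems by simp
  have pY: "pathmat Y i l \<in> carrier_mat (rdim Y (i+l)) (rdim Y i)"
    using pathmat_carrier[OF Y, of i l] Suc.prems by simp
  have fi: "f i \<in> carrier_mat (rdim Y i) (rdim X i)" using f Suc.prems unfolding is_hom_def by auto
  have fl: "f (i+l) \<in> carrier_mat (rdim Y (i+l)) (rdim X (i+l))" using f Suc.prems unfolding is_hom_def by auto
  have fl1: "f (i+l+1) \<in> carrier_mat (rdim Y (i+l+1)) (rdim X (i+l+1))" using f Suc.prems unfolding is_hom_def by auto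
  have com: "rmap Y (i+l) * f (i+l) = f (i+l+1) * rmap X (i+l)"
    using f Suc.prems unfolding is_hom_def by auto
  have "pathmat Y i (Suc l) * f i = rmap Y (i+l) * (pathmat Y i l * f i)"
    using rY pY fi by (simp add: assoc_mult_mat)
  also have "\<dots> = rmap Y (i+l) * (f (i + l) * pathmat X i l)" using Suc by simp
  also have "\<dots> = (rmap Y (i+l) * f (i + l)) * pathmat X i l"
    using rY fl pX by (simp add: assoc_mult_mat)
  also have "\<dots> = (f (i+l+1) * rmap X (i+l)) * pathmat X i l" using com by simp
  also have "\<dots> = f (i + Suc l) * pathmat X i (Suc l)"
    using fl1 rX pX by (simp add: assoc_mult_mat)
  finally show ?case .
qed



lemma left_inverse_exists:
  fixes A :: "'k::field mat"
  assumes A: "A \<in> carrier_mat nr nc"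
    and inj: "\<forall>v \<in> carrier_vec nc. A *\<^sub>v v = 0\<^sub>v nr \<longrightarrow> v = 0\<^sub>v nc"
  shows "\<exists>G \<in> carrier_mat nc nr. G * A = 1\<^sub>m nc"
proof -
  obtain C where C: "gauss_jordan_single A = C" by simp
  note gj = gauss_jordan_single[OF A C]
  have Cc: "C \<in> carrier_mat nr nc" and ref: "row_echelon_form C" using gj by auto
  obtain P Q where PC: "C = P * A" and P: "P \<in> carrier_mat nr nr" using gj(4) by blast
  have injC: "\<And>v. v \<in> carrier_vec nc \<Longrightarrow> C *\<^sub>v v = 0\<^sub>v nr \<Longrightarrow> v = 0\<^sub>v nc"
    using gj(1) inj by blast
  obtain p where piv: "pivot_fun C p nc" using ref Cc unfolding row_echelon_form_def by auto
  have dimC: "dim_row C = nr" using Cc by auto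
  note pD = pivot_funD[OF dimC piv]
  have allpiv: "snd ` set (pivot_positions C) = {0..<nc}"
  proof (rule ccontr)
    assume "snd ` set (pivot_positions C) \<noteq> {0..<nc}"
    note fb = find_base_vector[OF ref Cc this]
    then show False using injC by blast
  qed
  have ex: "\<exists>i<nr. p i = j" if "j < nc" for j
  proof -
    have "j \<in> snd ` set (pivot_positions C)" using allpiv that by auto
    then show ?thesis unfolding pivot_positions(1)[OF Cc piv] by auto
  qed
  have uniq: "i = i'" if "i < nr" "i' < nr" "p i = p i'" "p i < nc" for i i'
  proof (rule ccontr)
    assume "i \<noteq> i'"
    then have "C $$ (i', p i) = 0" using pD(5)[of i i'] that by auto
    moreover have "C $$ (i', p i') = 1" using pD(4)[of i'] that by auto
    ultimately show False using that by auto
  qed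
  define G0 :: "'k mat" where "G0 = mat nc nr (\<lambda>(j,i). if p i = j then 1 else 0)"
  have G0C: "G0 * C = 1\<^sub>m nc"
  proof (rule eq_matI)
    fix j j' assume jj: "j < dim_row (1\<^sub>m nc :: 'k mat)" "j' < dim_col (1\<^sub>m nc :: 'k mat)"
    then have j: "j < nc" "j' < nc" by auto
    obtain i0 where i0: "i0 < nr" "p i0 = j" using ex[OF j(1)] by auto
    have "(G0 * C) $$ (j, j') = (\<Sum>i\<in>{0..<nr}. (if p i = j then 1 else 0) * C $$ (i, j'))"
      using j Cc by (simp add: G0_def scalar_prod_def)
    also have "\<dots> = (\<Sum>i\<in>{0..<nr}. (if i = i0 then C $$ (i0, j') else 0))"
      by (rule sum.cong) (use uniq i0 j in auto)
    also have "\<dots> = C $$ (i0, j')" using i0 by simp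
    also have "\<dots> = 1\<^sub>m nc $$ (j, j')"
    proof (cases "j' = j")
      case True then show ?thesis using pD(4)[of i0] i0 j by auto
    next
      case False
      obtain i1 where i1: "i1 < nr" "p i1 = j'" using ex[OF j(2)] by auto
      have "i1 \<noteq> i0" using False i0 i1 by auto
      then have "C $$ (i0, p i1) = 0" using pD(5)[of i1 i0] i0 i1 j by auto
      then show ?thesis using False i1 j by auto
    qed
    finally show "(G0 * C) $$ (j, j') = 1\<^sub>m nc $$ (j, j')" .
  next
    show "dim_row (G0 * C) = dim_row (1\<^sub>m nc :: 'k mat)" by (simp add: G0_def)
    show "dim_col (G0 * C) = dim_col (1\<^sub>m nc :: 'k mat)" using Cc by simp
  qed
  have G0c: "G0 \<in> carrier_mat nc nr" by (simp add: G0_def)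
  have "(G0 * P) * A = G0 * (P * A)" using G0c P A by (simp add: assoc_mult_mat)
  also have "\<dots> = 1\<^sub>m nc" using G0C PC by simp
  finally show ?thesis using G0c P by (intro bexI[of _ "G0 * P"]) auto
qed



lemma mult_inner0: "A \<in> carrier_mat r 0 \<Longrightarrow> B \<in> carrier_mat 0 m \<Longrightarrow> A * B = 0\<^sub>m r m"
  by (rule eq_matI) (auto simp: scalar_prod_def)

lemma inj_IR:
  fixes n :: nat and c :: "nat \<Rightarrow> nat"
  assumes q: "q < n" and Lq: "L \<le> q"
   and cov: "\<And>i. L \<le> i \<Longrightarrow> i \<le> q \<Longrightarrow> q < i + c i"
   and tight: "0 < L \<Longrightarrow> L - 1 + c (L - 1) \<le> q"
  shows "injective_module n c (interval_rep L q :: 'k::field rep)"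
  unfolding injective_module_def
proof (intro conjI allI impI)
  show "valid_rep n c (interval_rep L q :: 'k rep)" using valid_IR[OF q cov] by blast
next
  fix X Y :: "'k rep" and f g
  assume X: "valid_rep n c X" and Y: "valid_rep n c Y" and fh: "is_hom n X Y f"
    and fm: "is_mono n X f" and gh: "is_hom n X (interval_rep L q) g"
  have fc: "\<And>j. j < n \<Longrightarrow> f j \<in> carrier_mat (rdim Y j) (rdim X j)" using fh unfolding is_hom_def by auto
  have gc: "\<And>j. j < n \<Longrightarrow> g j \<in> carrier_mat (dI L q j) (rdim X j)" using gh unfolding is_hom_def by auto
  have gcom: "\<And>j. j + 1 < n \<Longrightarrow> rmap (interval_rep L q) j * g j = g (j+1) * rmap X j"
    using gh unfolding is_hom_def by auto
  have rX: "\<And>j. j + 1 < n \<Longrightarrow> rmap X j \<in> carrier_mat (rdim X (j+1)) (rdim X j)"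
    using X unfolding valid_rep_def by auto
  have rY: "\<And>j. j + 1 < n \<Longrightarrow> rmap Y j \<in> carrier_mat (rdim Y (j+1)) (rdim Y j)"
    using Y unfolding valid_rep_def by auto
  have path1: "\<And>Z j. pathmat Z j 1 = rmap Z j * 1\<^sub>m (rdim Z j)" by (simp add: numeral_eq_Suc)
  have gform0: "k \<le> q - L \<Longrightarrow> g (q - k) = g q * pathmat X (q - k) k" for k
  proof (induction k)
    case 0
    then show ?case using gc[OF q] by simp
  next
    case (Suc k)
    define j where "j = q - Suc k"
    have j1: "j + 1 = q - k" "L \<le> j" "j + 1 \<le> q" using Suc.prems Lq unfolding j_def by auto
    have jn: "j + 1 < n" using j1 q by auto
    have "g j = rmap (interval_rep L q) j * g j"
    proof -
      have jq: "dI L q j = 1" "dI L q (j+1) = 1" using j1 by (auto simp: dI_def)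
      have "rmap (interval_rep L q) j = (1\<^sub>m 1 :: 'k mat)" unfolding rmap_IR jq by (rule ones_11)
      then show ?thesis using gc[of j] jn jq by simp
    qed
    also have "\<dots> = g (j+1) * rmap X j" using gcom jn by simp
    also have "\<dots> = g q * pathmat X (j+1) k * rmap X j" using Suc j1 by simp
    also have "\<dots> = g q * (pathmat X (j+1) k * pathmat X j 1)"
    proof -
      have e: "j + 1 + k = q" using j1 Suc.prems by auto
      have pc: "pathmat X (j+1) k \<in> carrier_mat (rdim X q) (rdim X (j+1))"
        using pathmat_carrier[OF X, of "j+1" k] e q by simp
      have "g q * pathmat X (j+1) k * rmap X j = g q * (pathmat X (j+1) k * rmap X j)"
        by (rule assoc_mult_mat[OF gc[OF q] pc rX[OF jn]])
      then show ?thesis using rX[OF jn] by (simp add: path1)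
    qed
    also have "\<dots> = g q * pathmat X j (1 + k)"
      using pathmat_add[OF X, of j 1 k] j1 q by simp
    finally show ?case using j1 unfolding j_def by (simp add: add.commute)
  qed
  have gform: "\<And>j. L \<le> j \<Longrightarrow> j \<le> q \<Longrightarrow> g j = g q * pathmat X j (q - j)"
    using gform0[of "q - j" for j] by (metis diff_diff_cancel diff_le_mono2)
  have monoq: "\<forall>v \<in> carrier_vec (rdim X q). f q *\<^sub>v v = 0\<^sub>v (rdim Y q) \<longrightarrow> v = 0\<^sub>v (rdim X q)"
    using fm fc[OF q] q unfolding is_mono_def by auto
  obtain G where G: "G \<in> carrier_mat (rdim X q) (rdim Y q)" "G * f q = 1\<^sub>m (rdim X q)"
    using left_inverse_exists[OF fc[OF q] monoq] by blast
  define Lam where "Lam = g q * G"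
  have gq: "g q \<in> carrier_mat 1 (rdim X q)" using gc[OF q] Lq by (simp add: dI_def)
  have Lc: "Lam \<in> carrier_mat 1 (rdim Y q)" using G gq unfolding Lam_def by auto
  have Lf: "Lam * f q = g q" unfolding Lam_def using G gq fc[OF q] by (simp add: assoc_mult_mat)
  define h where "h j = (if L \<le> j \<and> j \<le> q then Lam * pathmat Y j (q - j) else 0\<^sub>m 0 (rdim Y j))" for j
  have hc: "\<And>j. j < n \<Longrightarrow> h j \<in> carrier_mat (dI L q j) (rdim Y j)"
  proof -
    fix j assume jn: "j < n"
    show "h j \<in> carrier_mat (dI L q j) (rdim Y j)"
    proof (cases "L \<le> j \<and> j \<le> q")
      case True
      then have "pathmat Y j (q - j) \<in> carrier_mat (rdim Y q) (rdim Y j)"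
        using pathmat_carrier[OF Y, of j "q - j"] q by simp
      then show ?thesis using True Lc by (simp add: h_def dI_def)
    qed (auto simp: h_def dI_def)
  qed
  have hcom: "rmap (interval_rep L q) j * h j = h (j + 1) * rmap Y j" if jn: "j + 1 < n" for j
  proof (cases "L \<le> j + 1 \<and> j + 1 \<le> q")
    case False
    have d0: "dI L q (j+1) = 0" using False by (simp add: dI_def)
    show ?thesis
      by (rule mat_eq_rows0[of _ "rdim Y j"]) (use hc[of j] hc[of "j+1"] rY[OF jn] jn d0 in \<open>auto simp: rmap_IR\<close>)
  next
    case True
    have pc: "pathmat Y (j+1) (q - (j+1)) \<in> carrier_mat (rdim Y q) (rdim Y (j+1))"
      using pathmat_carrier[OF Y, of "j+1" "q - (j+1)"] True q by simp
    have padd: "pathmat Y j (q - j) = pathmat Y (j+1) (q - (j+1)) * rmap Y j"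
      using pathmat_add[OF Y, of j 1 "q - (j+1)"] True q rY[OF jn]
      by (simp add: path1 Suc_diff_Suc)
    have h1: "h (j+1) = Lam * pathmat Y (j+1) (q - (j+1))" using True by (simp add: h_def)
    have rhs: "h (j + 1) * rmap Y j = Lam * pathmat Y j (q - j)"
      unfolding h1 padd by (rule assoc_mult_mat[OF Lc pc rY[OF jn]])
    show ?thesis
    proof (cases "L \<le> j")
      case True2: True
      have "rmap (interval_rep L q) j = (1\<^sub>m 1 :: 'k mat)"
        using True True2 by (simp add: rmap_IR dI_def ones_11[simplified])
      moreover have "h j = Lam * pathmat Y j (q - j)" using True True2 by (simp add: h_def)
      moreover have cc: "Lam * pathmat Y j (q - j) \<in> carrier_mat 1 (rdim Y j)"
        using Lc pathmat_carrier[OF Y, of j "q-j"] q True by auto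
      ultimately show ?thesis using rhs left_mult_one_mat[OF cc] by metis
    next
      case False2: False
      have jL: "j + 1 = L" using True False2 by auto
      have t: "j + c j \<le> q" using tight jL by auto
      have rel: "pathmat Y j (c j) = 0\<^sub>m (rdim Y (j + c j)) (rdim Y j)"
        using Y t q unfolding valid_rep_def by auto
      have "pathmat Y j (c j + (q - j - c j)) = pathmat Y (j + c j) (q - j - c j) * pathmat Y j (c j)"
        using pathmat_add[OF Y, of j "c j" "q - j - c j"] t q by simp
      also have "\<dots> = 0\<^sub>m (rdim Y q) (rdim Y j)"
        using rel pathmat_carrier[OF Y, of "j + c j" "q - j - c j"] t q by simp
      finally have pz: "pathmat Y j (q - j) = 0\<^sub>m (rdim Y q) (rdim Y j)" using t by simp
      have "rmap (interval_rep L q) j * h j = 0\<^sub>m 1 (rdim Y j)"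
        using jL True by (simp add: rmap_IR h_def dI_def mult_inner0)
      also have "\<dots> = h (j + 1) * rmap Y j" using rhs pz Lc by simp
      finally show ?thesis .
    qed
  qed
  show "\<exists>h. is_hom n Y (interval_rep L q) h \<and> (\<forall>j<n. h j * f j = g j)"
  proof (intro exI conjI allI impI)
    show "is_hom n Y (interval_rep L q) h" unfolding is_hom_def using hc hcom by auto
  next
    fix j assume jn: "j < n"
    show "h j * f j = g j"
    proof (cases "L \<le> j \<and> j \<le> q")
      case True
      have hp: "pathmat Y j (q - j) * f j = f q * pathmat X j (q - j)"
        using hom_path[OF X Y fh, of j "q - j"] True q by simp
      have "h j * f j = Lam * (pathmat Y j (q - j) * f j)"
        using True Lc pathmat_carrier[OF Y, of j "q-j"] fc[OF jn] q by (simp add: h_def assoc_mult_mat)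
      also have "\<dots> = (Lam * f q) * pathmat X j (q - j)"
        using hp Lc fc[OF q] pathmat_carrier[OF X, of j "q-j"] True q by (simp add: assoc_mult_mat)
      also have "\<dots> = g j" using Lf gform[of j] True by simp
      finally show ?thesis .
    next
      case False
      show ?thesis
        by (rule mat_eq_rows0[of _ "rdim X j"]) (use hc[OF jn] fc[OF jn] gc[OF jn] False in \<open>auto simp: dI_def\<close>)
    qed
  qed
qed



lemma ones_Suc0[simp]: "ones (Suc 0) (Suc 0) = (1\<^sub>m (Suc 0) :: 'k::field mat)"
  using ones_11 by simp

lemma mat_vec_zero: "A \<in> carrier_mat r k \<Longrightarrow> A *\<^sub>v 0\<^sub>v k = (0\<^sub>v r :: 'k::field vec)"
  by (rule eq_vecI) (auto simp: scalar_prod_def)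

lemma zero_mat_vec: "v \<in> carrier_vec k \<Longrightarrow> 0\<^sub>m r k *\<^sub>v v = (0\<^sub>v r :: 'k::field vec)"
  by (rule eq_vecI) (auto simp: scalar_prod_def)

definition u1 :: "'k::field vec" where "u1 = vec 1 (\<lambda>_. 1)"

lemma u1_carrier[simp]: "u1 \<in> carrier_vec 1" by (simp add: u1_def)
lemma u1_carrier'[simp]: "u1 \<in> carrier_vec (Suc 0)" by (simp add: u1_def)
lemma u1_nz: "u1 \<noteq> (0\<^sub>v 1 :: 'k::field vec)"
proof
  assume "u1 = (0\<^sub>v 1 :: 'k vec)"
  then have "u1 $ 0 = (0\<^sub>v 1 :: 'k vec) $ 0" by simp
  then show False by (simp add: u1_def)
qed

lemma u1_nz'[simp]: "u1 \<noteq> (0\<^sub>v (Suc 0) :: 'k::field vec)" using u1_nz by simp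

lemma ones11_vec: "v \<in> carrier_vec 1 \<Longrightarrow> ones 1 1 *\<^sub>v v = (v :: 'k::field vec)"
  by (simp add: ones_11)

lemma cols0_vec: "A \<in> carrier_mat r 0 \<Longrightarrow> w \<in> carrier_vec 0 \<Longrightarrow> A *\<^sub>v w = (0\<^sub>v r :: 'k::field vec)"
  by (rule eq_vecI) (auto simp: scalar_prod_def)

lemma vec0_eq: "v \<in> carrier_vec 0 \<Longrightarrow> v = (0\<^sub>v 0 :: 'k::field vec)"
  by (rule eq_vecI) auto

lemma col_zero: "A \<in> carrier_mat r 1 \<Longrightarrow> A *\<^sub>v u1 = 0\<^sub>v r \<Longrightarrow> A = (0\<^sub>m r 1 :: 'k::field mat)"
proof (rule eq_matI)
  fix i j assume A: "A \<in> carrier_mat r 1" and z: "A *\<^sub>v u1 = 0\<^sub>v r"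
    and ij: "i < dim_row (0\<^sub>m r 1 :: 'k mat)" "j < dim_col (0\<^sub>m r 1 :: 'k mat)"
  have "(A *\<^sub>v u1) $ i = A $$ (i, 0)" using A ij by (simp add: u1_def scalar_prod_def row_def)
  then show "A $$ (i, j) = 0\<^sub>m r 1 $$ (i, j)" using z ij by simp
qed auto

lemma hom_comp:
  assumes X: "valid_rep n c X" and Y: "valid_rep n c Y" and Z: "valid_rep n c Z"
    and f: "is_hom n X Y f" and g: "is_hom n Y Z g"
  shows "is_hom n X Z (\<lambda>j. g j * f j)"
  unfolding is_hom_def
proof (intro conjI allI impI)
  fix j assume "j < n"
  then show "g j * f j \<in> carrier_mat (rdim Z j) (rdim X j)" using f g unfolding is_hom_def by auto
next
  fix j assume jn: "j + 1 < n"
  have fj: "f j \<in> carrier_mat (rdim Y j) (rdim X j)" "f (j+1) \<in> carrier_mat (rdim Y (j+1)) (rdim X (j+1))"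
    using f jn unfolding is_hom_def by auto
  have gj: "g j \<in> carrier_mat (rdim Z j) (rdim Y j)" "g (j+1) \<in> carrier_mat (rdim Z (j+1)) (rdim Y (j+1))"
    using g jn unfolding is_hom_def by auto
  have rX: "rmap X j \<in> carrier_mat (rdim X (j+1)) (rdim X j)" using X jn unfolding valid_rep_def by auto
  have rY: "rmap Y j \<in> carrier_mat (rdim Y (j+1)) (rdim Y j)" using Y jn unfolding valid_rep_def by auto
  have rZ: "rmap Z j \<in> carrier_mat (rdim Z (j+1)) (rdim Z j)" using Z jn unfolding valid_rep_def by auto
  have cf: "rmap Y j * f j = f (j+1) * rmap X j" using f jn unfolding is_hom_def by auto
  have cg: "rmap Z j * g j = g (j+1) * rmap Y j" using g jn unfolding is_hom_def by auto
  have "rmap Z j * (g j * f j) = (rmap Z j * g j) * f j" using rZ gj fj by (simp add: assoc_mult_mat)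
  also have "\<dots> = g (j+1) * (rmap Y j * f j)" using cg rY gj fj by (simp add: assoc_mult_mat)
  also have "\<dots> = (g (j+1) * f (j+1)) * rmap X j" using cf rX gj fj by (simp add: assoc_mult_mat)
  finally show "rmap Z j * (g j * f j) = g (j + 1) * f (j + 1) * rmap X j" .
qed

lemma ones_mono:
  assumes "p' \<le> p" "q \<le> q'"
  shows "is_mono n (interval_rep p q) (\<lambda>j. ones (dI p' q' j) (dI p q j) :: 'k::field mat)"
  unfolding is_mono_def
proof (intro allI impI ballI)
  fix j and v :: "'k vec"
  assume v: "v \<in> carrier_vec (rdim (interval_rep p q :: 'k rep) j)"
    and z: "ones (dI p' q' j) (dI p q j) *\<^sub>v v = 0\<^sub>v (dim_row (ones (dI p' q' j) (dI p q j) :: 'k mat))"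
  show "v = 0\<^sub>v (rdim (interval_rep p q :: 'k rep) j)"
  proof (cases "p \<le> j \<and> j \<le> q")
    case True
    then have "dI p q j = 1" "dI p' q' j = 1" using assms by (auto simp: dI_def)
    then show ?thesis using v z ones11_vec[of v] by simp
  next
    case False
    then have "dI p q j = 0" by (simp add: dI_def)
    then show ?thesis using v vec0_eq by simp
  qed
qed

lemma extend_phi:
  assumes bn: "b < n" and ea: "e < a" and ab: "a \<le> b"
    and cov: "\<And>i. e \<le> i \<Longrightarrow> i \<le> b \<Longrightarrow> b < i + c i"
    and I0: "injective_module n c (I0 :: 'k::field rep)"
    and eh: "is_hom n (interval_rep a b) I0 \<epsilon>"
  shows "\<exists>\<phi>. is_hom n (interval_rep e b) I0 \<phi> \<and> (\<forall>j<n. \<phi> j * ones (dI e b j) (dI a b j) = \<epsilon> j)"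
proof -
  have M: "valid_rep n c (interval_rep a b :: 'k rep)" by (rule valid_IR[OF bn]) (use cov ea in auto)
  have E: "valid_rep n c (interval_rep e b :: 'k rep)" by (rule valid_IR[OF bn cov])
  have fh: "is_hom n (interval_rep a b) (interval_rep e b) (\<lambda>j. ones (dI e b j) (dI a b j) :: 'k mat)"
    by (rule hom_IR) (use ea in auto)
  have fm: "is_mono n (interval_rep a b) (\<lambda>j. ones (dI e b j) (dI a b j) :: 'k mat)"
    by (rule ones_mono) (use ea in auto)
  show ?thesis using I0 M E fh fm eh unfolding injective_module_def by blast
qed

lemma phi_nonzero:
  assumes bn: "b < n" and ea: "e < a" and ab: "a \<le> b"
    and cov: "\<And>i. e \<le> i \<Longrightarrow> i \<le> b \<Longrightarrow> b < i + c i"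
    and I0: "valid_rep n c (I0 :: 'k::field rep)"
    and em: "is_mono n (interval_rep a b) \<epsilon>" and eh: "is_hom n (interval_rep a b) I0 \<epsilon>"
    and ph: "is_hom n (interval_rep e b) I0 \<phi>"
    and pe: "\<forall>j<n. \<phi> j * ones (dI e b j) (dI a b j) = \<epsilon> j"
    and m: "a \<le> m" "m \<le> b"
  shows "pathmat I0 e (m - e) *\<^sub>v (\<phi> e *\<^sub>v u1) \<noteq> 0\<^sub>v (rdim I0 m)"
proof
  assume z: "pathmat I0 e (m - e) *\<^sub>v (\<phi> e *\<^sub>v u1) = 0\<^sub>v (rdim I0 m)"
  have E: "valid_rep n c (interval_rep e b :: 'k rep)" by (rule valid_IR[OF bn cov])
  have mn: "m < n" "e < n" using m bn ea by auto
  have pc: "\<And>j. j < n \<Longrightarrow> \<phi> j \<in> carrier_mat (rdim I0 j) (dI e b j)" using ph unfolding is_hom_def by auto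
  have ec: "\<And>j. j < n \<Longrightarrow> \<epsilon> j \<in> carrier_mat (rdim I0 j) (dI a b j)" using eh unfolding is_hom_def by auto
  have dm: "dI e b m = 1" "dI a b m = 1" "dI e b e = 1" using m ea by (auto simp: dI_def)
  have pathc: "pathmat I0 e (m - e) \<in> carrier_mat (rdim I0 m) (rdim I0 e)"
    using pathmat_carrier[OF I0, of e "m - e"] m ea mn by simp
  have hp: "pathmat I0 e (m - e) * \<phi> e = \<phi> m * pathmat (interval_rep e b) e (m - e)"
    using hom_path[OF E I0 ph, of e "m - e"] m ea mn by simp
  have pE: "pathmat (interval_rep e b) e (m - e) = (ones 1 1 :: 'k mat)"
    using m ea by (simp add: pathmat_IR dI_def)
  have phm: "\<phi> m = \<epsilon> m"
  proof -
    have "\<phi> m * ones (dI e b m) (dI a b m) = \<epsilon> m" using pe mn by simp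
    then have "\<phi> m * ones 1 1 = \<epsilon> m" unfolding dm by simp
    then show ?thesis using pc[OF mn(1)] dm by (simp add: ones_11)
  qed
  have "pathmat I0 e (m - e) *\<^sub>v (\<phi> e *\<^sub>v u1) = (pathmat I0 e (m - e) * \<phi> e) *\<^sub>v u1"
  proof -
    have "\<phi> e \<in> carrier_mat (rdim I0 e) 1" using pc[OF mn(2)] dm by simp
    then show ?thesis by (rule assoc_mult_mat_vec[symmetric, OF pathc _ u1_carrier])
  qed
  also have "\<dots> = \<epsilon> m *\<^sub>v u1" using hp pE phm ec[OF mn(1)] dm
    by (simp add: ones_11)
  finally have "\<epsilon> m *\<^sub>v u1 = 0\<^sub>v (dim_row (\<epsilon> m))" using z ec[OF mn(1)] by simp
  then have "(u1 :: 'k vec) = 0\<^sub>v (rdim (interval_rep a b :: 'k rep) m)"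
  proof -
    have all: "\<forall>v\<in>carrier_vec (dI a b m). \<epsilon> m *\<^sub>v v = 0\<^sub>v (dim_row (\<epsilon> m)) \<longrightarrow> v = 0\<^sub>v (dI a b m)"
      using em mn unfolding is_mono_def by simp
    have uc: "(u1 :: 'k vec) \<in> carrier_vec (dI a b m)" using dm(2) by simp
    have "(u1 :: 'k vec) = 0\<^sub>v (dI a b m)" using bspec[OF all uc] \<open>\<epsilon> m *\<^sub>v u1 = 0\<^sub>v (dim_row (\<epsilon> m))\<close> by (rule mp)
    then show ?thesis by simp
  qed
  then show False using u1_nz dm by simp
qed

lemma not_injdim0:
  assumes bn: "b < n" and ea: "e < a" and ab: "a \<le> b"
    and cov: "\<And>i. e \<le> i \<Longrightarrow> i \<le> b \<Longrightarrow> b < i + c i"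
  shows "\<not> injdim_le n c (interval_rep a b :: 'k::field rep) 0"
proof
  assume "injdim_le n c (interval_rep a b :: 'k::field rep) 0"
  then obtain I :: "nat \<Rightarrow> 'k rep" and \<epsilon> \<delta> where
    inj: "injective_module n c (I 0)" and eh: "is_hom n (interval_rep a b) (I 0) \<epsilon>"
    and em: "is_mono n (interval_rep a b) \<epsilon>"
    and ex: "\<forall>j<n. \<forall>v\<in>carrier_vec (rdim (I 0) j). \<exists>w\<in>carrier_vec (dI a b j). v = \<epsilon> j *\<^sub>v w"
    unfolding injdim_le_def by auto
  have I0: "valid_rep n c (I 0)" using inj unfolding injective_module_def by auto
  obtain \<phi> where ph: "is_hom n (interval_rep e b) (I 0) \<phi>"
     and pe: "\<forall>j<n. \<phi> j * ones (dI e b j) (dI a b j) = \<epsilon> j"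
    using extend_phi[OF bn ea ab cov inj eh] by blast
  have en: "e < n" using ea ab bn by auto
  have pc: "\<phi> e \<in> carrier_mat (rdim (I 0) e) 1" using ph en ea ab unfolding is_hom_def by (auto simp: dI_def)
  have ec: "\<epsilon> e \<in> carrier_mat (rdim (I 0) e) 0" using eh en ea unfolding is_hom_def by (auto simp: dI_def)
  have d0: "dI a b e = 0" using ea by (simp add: dI_def)
  obtain w where w: "w \<in> carrier_vec 0" "\<phi> e *\<^sub>v u1 = \<epsilon> e *\<^sub>v w"
    using ex en pc d0 by (metis mult_mat_vec_carrier u1_carrier)
  have z: "\<phi> e *\<^sub>v u1 = 0\<^sub>v (rdim (I 0) e)" using w ec cols0_vec by metis
  have "pathmat (I 0) e (b - e) *\<^sub>v (\<phi> e *\<^sub>v u1) = 0\<^sub>v (rdim (I 0) b)"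
    unfolding z using pathmat_carrier[OF I0, of e "b - e"] ea ab bn by (simp add: mat_vec_zero)
  then show False using phi_nonzero[OF bn ea ab cov I0 em eh ph pe, of b] ab by simp
qed



lemma vec_diff_zero: "x \<in> carrier_vec k \<Longrightarrow> y \<in> carrier_vec k \<Longrightarrow> x - y = 0\<^sub>v k \<Longrightarrow> x = (y :: 'k::field vec)"
proof (rule eq_vecI)
  fix i assume x: "x \<in> carrier_vec k" and y: "y \<in> carrier_vec k" and d: "x - y = 0\<^sub>v k" and i: "i < dim_vec y"
  have "(x - y) $ i = 0" using d i y by simp
  then show "x $ i = y $ i" using i x y by simp
qed auto

lemma vec_same_diff: "x \<in> carrier_vec k \<Longrightarrow> x - x = (0\<^sub>v k :: 'k::field vec)"
  by (rule eq_vecI) auto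

lemma forward_contra:
  assumes bn: "b < n" and ea: "e < a" and ab: "a \<le> b"
    and cov: "\<And>i. e \<le> i \<Longrightarrow> i \<le> b \<Longrightarrow> b < i + c i"
    and Le: "L' < e"
    and cov': "\<And>i. L' \<le> i \<Longrightarrow> i \<le> a - 1 \<Longrightarrow> a - 1 < i + c i"
    and mb: "L' + c L' \<le> b"
  shows "\<not> injdim_le n c (interval_rep a b :: 'k::field rep) 1"
proof
  assume "injdim_le n c (interval_rep a b :: 'k::field rep) 1"
  then obtain I :: "nat \<Rightarrow> 'k rep" and \<epsilon> \<delta> where
    inj: "\<forall>k\<le>1. injective_module n c (I k)" and eh: "is_hom n (interval_rep a b) (I 0) \<epsilon>"
    and em: "is_mono n (interval_rep a b) \<epsilon>"
    and dh: "\<forall>k<1. is_hom n (I k) (I (k + 1)) (\<delta> k)"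
    and ex: "\<forall>k\<le>1. \<forall>j<n. \<forall>v\<in>carrier_vec (rdim (I k) j).
           ((k < 1 \<longrightarrow> \<delta> k j *\<^sub>v v = 0\<^sub>v (rdim (I (k + 1)) j)) \<longleftrightarrow>
            (if k = 0 then (\<exists>w \<in> carrier_vec (rdim (interval_rep a b :: 'k rep) j). v = \<epsilon> j *\<^sub>v w)
             else (\<exists>w \<in> carrier_vec (rdim (I (k - 1)) j). v = \<delta> (k - 1) j *\<^sub>v w)))"
    unfolding injdim_le_def by blast
  have inj0: "injective_module n c (I 0)" and inj1: "injective_module n c (I 1)" using inj by auto
  have V0: "valid_rep n c (I 0)" and V1: "valid_rep n c (I 1)"
    using inj0 inj1 unfolding injective_module_def by auto
  have ph: "is_hom n (I 0) (I 1) (\<delta> 0)" using dh by simp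
  have ex0: "\<And>j v. j < n \<Longrightarrow> v \<in> carrier_vec (rdim (I 0) j) \<Longrightarrow>
      (\<delta> 0 j *\<^sub>v v = 0\<^sub>v (rdim (I 1) j)) \<longleftrightarrow> (\<exists>w\<in>carrier_vec (dI a b j). v = \<epsilon> j *\<^sub>v w)"
  proof -
    fix j and v :: "'k vec" assume "j < n" "v \<in> carrier_vec (rdim (I 0) j)"
    then show "(\<delta> 0 j *\<^sub>v v = 0\<^sub>v (rdim (I 1) j)) \<longleftrightarrow> (\<exists>w\<in>carrier_vec (dI a b j). v = \<epsilon> j *\<^sub>v w)"
      using ex[rule_format, of 0 j v] by simp
  qed
  have ex1: "\<And>j v. j < n \<Longrightarrow> v \<in> carrier_vec (rdim (I 1) j) \<Longrightarrow>
      (\<exists>w\<in>carrier_vec (rdim (I 0) j). v = \<delta> 0 j *\<^sub>v w)"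
  proof -
    fix j and v :: "'k vec" assume "j < n" "v \<in> carrier_vec (rdim (I 1) j)"
    then show "\<exists>w\<in>carrier_vec (rdim (I 0) j). v = \<delta> 0 j *\<^sub>v w"
      using ex[rule_format, of 1 j v] by simp
  qed
  obtain \<phi> where \<phi>h: "is_hom n (interval_rep e b) (I 0) \<phi>"
     and pe: "\<forall>j<n. \<phi> j * ones (dI e b j) (dI a b j) = \<epsilon> j"
    using extend_phi[OF bn ea ab cov inj0 eh] by blast
  have an: "a < n" "e < n" "L' < n" using ea ab bn Le by auto
  have a1: "e \<le> a - 1" "L' \<le> a - 1" "L' \<le> a - Suc 0" "e \<le> a - Suc 0" using ea Le by auto
  have E: "valid_rep n c (interval_rep e b :: 'k rep)" by (rule valid_IR[OF bn cov])
  have C: "valid_rep n c (interval_rep e (a - 1) :: 'k rep)"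
    by (rule valid_IR) (use cov' Le an in auto)
  have F: "valid_rep n c (interval_rep L' (a - 1) :: 'k rep)"
    by (rule valid_IR) (use cov' Le an in auto)
  have \<phi>c: "\<And>j. j < n \<Longrightarrow> \<phi> j \<in> carrier_mat (rdim (I 0) j) (dI e b j)" using \<phi>h unfolding is_hom_def by auto
  have \<epsilon>c: "\<And>j. j < n \<Longrightarrow> \<epsilon> j \<in> carrier_mat (rdim (I 0) j) (dI a b j)" using eh unfolding is_hom_def by auto
  have \<delta>c: "\<And>j. j < n \<Longrightarrow> \<delta> 0 j \<in> carrier_mat (rdim (I 1) j) (rdim (I 0) j)" using ph unfolding is_hom_def by auto
  define \<chi> where "\<chi> j = \<delta> 0 j * \<phi> j" for j
  have \<chi>h: "is_hom n (interval_rep e b) (I 1) \<chi>"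
    unfolding \<chi>_def by (rule hom_comp[OF E V0 V1 \<phi>h ph])
  have \<chi>c: "\<And>j. j < n \<Longrightarrow> \<chi> j \<in> carrier_mat (rdim (I 1) j) (dI e b j)" using \<chi>h unfolding is_hom_def by auto
  have \<phi>a: "\<phi> a = \<epsilon> a"
  proof -
    have d: "dI e b a = 1" "dI a b a = 1" using ea ab by (auto simp: dI_def)
    have "\<phi> a * ones (dI e b a) (dI a b a) = \<epsilon> a" using pe an by simp
    then show ?thesis using \<phi>c[OF an(1)] unfolding d by (simp add: ones_11)
  qed
  have \<chi>a: "\<chi> a = 0\<^sub>m (rdim (I 1) a) 1"
  proof (rule col_zero)
    show "\<chi> a \<in> carrier_mat (rdim (I 1) a) 1" using \<chi>c[OF an(1)] ea ab by (simp add: dI_def)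
    have ea1: "\<epsilon> a \<in> carrier_mat (rdim (I 0) a) 1" using \<epsilon>c[OF an(1)] ea ab by (simp add: dI_def)
    have "\<chi> a *\<^sub>v u1 = \<delta> 0 a *\<^sub>v (\<epsilon> a *\<^sub>v u1)"
      unfolding \<chi>_def \<phi>a by (rule assoc_mult_mat_vec[OF \<delta>c[OF an(1)] ea1 u1_carrier])
    also have "\<dots> = 0\<^sub>v (rdim (I 1) a)"
    proof -
      have "\<epsilon> a *\<^sub>v u1 \<in> carrier_vec (rdim (I 0) a)" using ea1 by simp
      moreover have "\<exists>w\<in>carrier_vec (dI a b a). \<epsilon> a *\<^sub>v u1 = \<epsilon> a *\<^sub>v w"
        using ab by (intro bexI[of _ u1]) (auto simp: dI_def)
      ultimately show ?thesis using ex0[OF an(1)] by blast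
    qed
    finally show "\<chi> a *\<^sub>v u1 = 0\<^sub>v (rdim (I 1) a)" .
  qed
  define g' where "g' j = (if e \<le> j \<and> j \<le> a - 1 then \<chi> j else 0\<^sub>m (rdim (I 1) j) 0)" for j
  have g'c: "\<And>j. j < n \<Longrightarrow> g' j \<in> carrier_mat (rdim (I 1) j) (dI e (a - 1) j)"
  proof -
    fix j assume jn: "j < n"
    show "g' j \<in> carrier_mat (rdim (I 1) j) (dI e (a - 1) j)"
    proof (cases "e \<le> j \<and> j \<le> a - 1")
      case True
      then have "dI e b j = 1" "dI e (a - 1) j = 1" using ea ab by (auto simp: dI_def)
      then show ?thesis using \<chi>c[OF jn] True by (simp add: g'_def)
    qed (auto simp: g'_def dI_def)
  qed
  have g'h: "is_hom n (interval_rep e (a - 1)) (I 1) g'"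
    unfolding is_hom_def
  proof (intro conjI allI impI)
    fix j assume "j < n" then show "g' j \<in> carrier_mat (rdim (I 1) j) (rdim (interval_rep e (a - 1) :: 'k rep) j)"
      using g'c by simp
  next
    fix j assume jn: "j + 1 < n"
    have r1: "rmap (I 1) j \<in> carrier_mat (rdim (I 1) (j+1)) (rdim (I 1) j)" using V1 jn unfolding valid_rep_def by auto
    show "rmap (I 1) j * g' j = g' (j + 1) * rmap (interval_rep e (a - 1)) j"
    proof (cases "e \<le> j \<and> j \<le> a - 1")
      case False
      then have d0: "dI e (a - 1) j = 0" by (simp add: dI_def)
      show ?thesis
        by (rule mat_eq_cols0[of _ "rdim (I 1) (j+1)"]) (use r1 g'c[of j] g'c[of "j+1"] jn d0 in \<open>auto simp: rmap_IR\<close>)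
    next
      case True
      have cm: "rmap (I 1) j * \<chi> j = \<chi> (j + 1) * rmap (interval_rep e b) j" using \<chi>h jn unfolding is_hom_def by auto
      have jb: "e \<le> j" "j + 1 \<le> b" "j \<le> b" using True ea ab by auto
      have rE: "rmap (interval_rep e b) j = (1\<^sub>m 1 :: 'k mat)" using jb by (simp add: rmap_IR dI_def)
      have c1: "\<chi> (j+1) \<in> carrier_mat (rdim (I 1) (j+1)) 1" using \<chi>c[of "j+1"] jn jb by (simp add: dI_def)
      have lhs: "rmap (I 1) j * g' j = \<chi> (j + 1)" using cm rE c1 True by (simp add: g'_def)
      show ?thesis
      proof (cases "j + 1 \<le> a - 1")
        case True2: True
        have "rmap (interval_rep e (a - 1)) j = (1\<^sub>m 1 :: 'k mat)" using True True2 by (simp add: rmap_IR dI_def)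
        then show ?thesis using lhs c1 True True2 by (simp add: g'_def)
      next
        case False2: False
        then have ja: "j + 1 = a" using True ea by auto
        have "rmap (interval_rep e (a - 1)) j = (ones 0 1 :: 'k mat)" using True False2 ja by (simp add: rmap_IR dI_def)
        moreover have "g' (j + 1) = 0\<^sub>m (rdim (I 1) a) 0" using False2 ja by (simp add: g'_def)
        ultimately have "g' (j + 1) * rmap (interval_rep e (a - 1)) j = 0\<^sub>m (rdim (I 1) a) 1"
          by (simp add: mult_inner0)
        then show ?thesis using lhs ja \<chi>a by simp
      qed
    qed
  qed
  define fCF where "fCF j = (ones (dI L' (a - 1) j) (dI e (a - 1) j) :: 'k mat)" for j
  have fCFh: "is_hom n (interval_rep e (a - 1)) (interval_rep L' (a - 1)) fCF"
    unfolding fCF_def by (rule hom_IR) (use Le in auto)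
  have fCFm: "is_mono n (interval_rep e (a - 1)) fCF"
    unfolding fCF_def by (rule ones_mono) (use Le in auto)
  obtain \<psi> where \<psi>h: "is_hom n (interval_rep L' (a - 1)) (I 1) \<psi>" and \<psi>f: "\<forall>j<n. \<psi> j * fCF j = g' j"
    using inj1 C F fCFh fCFm g'h unfolding injective_module_def by blast
  have \<psi>c: "\<And>j. j < n \<Longrightarrow> \<psi> j \<in> carrier_mat (rdim (I 1) j) (dI L' (a - 1) j)" using \<psi>h unfolding is_hom_def by auto
  have \<psi>e: "\<psi> e = \<chi> e"
  proof -
    have d: "dI L' (a - 1) e = 1" "dI e (a - 1) e = 1" using Le ea by (auto simp: dI_def)
    have "\<psi> e * fCF e = g' e" using \<psi>f an by simp
    moreover have "e \<le> a - 1" using ea by simp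
    ultimately show ?thesis using \<psi>c[OF an(2)] unfolding fCF_def d by (simp add: ones_11 g'_def)
  qed
  have \<psi>L: "\<psi> L' \<in> carrier_mat (rdim (I 1) L') 1" using \<psi>c[OF an(3)] a1 by (simp add: dI_def)
  define z where "z = \<psi> L' *\<^sub>v u1"
  have zc: "z \<in> carrier_vec (rdim (I 1) L')" using \<psi>L by (simp add: z_def)
  obtain y where yc: "y \<in> carrier_vec (rdim (I 0) L')" and yz: "z = \<delta> 0 L' *\<^sub>v y"
    using ex1[OF an(3) zc] by blast
  define P0 where "P0 = pathmat (I 0) L' (e - L')"
  define P1 where "P1 = pathmat (I 1) L' (e - L')"
  have P0c: "P0 \<in> carrier_mat (rdim (I 0) e) (rdim (I 0) L')"
    using pathmat_carrier[OF V0, of L' "e - L'"] Le an unfolding P0_def by simp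
  have P1c: "P1 \<in> carrier_mat (rdim (I 1) e) (rdim (I 1) L')"
    using pathmat_carrier[OF V1, of L' "e - L'"] Le an unfolding P1_def by simp
  have hp\<delta>: "P1 * \<delta> 0 L' = \<delta> 0 e * P0"
    using hom_path[OF V0 V1 ph, of L' "e - L'"] Le an unfolding P0_def P1_def by simp
  have hp\<psi>: "P1 * \<psi> L' = \<psi> e * pathmat (interval_rep L' (a - 1)) L' (e - L')"
    using hom_path[OF F V1 \<psi>h, of L' "e - L'"] Le an by (simp add: P1_def)
  have PF: "pathmat (interval_rep L' (a - 1)) L' (e - L') = (1\<^sub>m 1 :: 'k mat)"
    using Le a1 by (simp add: pathmat_IR dI_def ones_11)
  have \<psi>ec: "\<psi> e \<in> carrier_mat (rdim (I 1) e) 1" using \<psi>c[OF an(2)] a1 Le by (simp add: dI_def)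
  have \<phi>ec: "\<phi> e \<in> carrier_mat (rdim (I 0) e) 1" using \<phi>c[OF an(2)] ea ab by (simp add: dI_def)
  define y' where "y' = P0 *\<^sub>v y"
  define x where "x = \<phi> e *\<^sub>v u1"
  have y'c: "y' \<in> carrier_vec (rdim (I 0) e)" using P0c yc by (simp add: y'_def)
  have xc: "x \<in> carrier_vec (rdim (I 0) e)" using \<phi>ec by (simp add: x_def)
  have "\<delta> 0 e *\<^sub>v y' = (\<delta> 0 e * P0) *\<^sub>v y"
    unfolding y'_def using \<delta>c[OF an(2)] P0c yc by simp
  also have "\<dots> = P1 *\<^sub>v z" unfolding yz hp\<delta>[symmetric] using P1c \<delta>c[OF an(3)] yc by simp
  also have "\<dots> = (P1 * \<psi> L') *\<^sub>v u1" unfolding z_def using P1c \<psi>L by simp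
  also have "\<dots> = \<psi> e *\<^sub>v u1" unfolding hp\<psi> PF using \<psi>ec by simp
  also have "\<dots> = \<delta> 0 e *\<^sub>v x" unfolding \<psi>e \<chi>_def x_def using \<delta>c[OF an(2)] \<phi>ec by simp
  finally have eqv: "\<delta> 0 e *\<^sub>v y' = \<delta> 0 e *\<^sub>v x" .
  have "\<delta> 0 e *\<^sub>v (y' - x) = \<delta> 0 e *\<^sub>v y' - \<delta> 0 e *\<^sub>v x"
    by (rule mult_minus_distrib_mat_vec[OF \<delta>c[OF an(2)] y'c xc])
  also have "\<dots> = 0\<^sub>v (rdim (I 1) e)" unfolding eqv by (rule vec_same_diff) (use \<delta>c[OF an(2)] xc in simp)
  finally have "\<delta> 0 e *\<^sub>v (y' - x) = 0\<^sub>v (rdim (I 1) e)" .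
  moreover have dcy: "y' - x \<in> carrier_vec (rdim (I 0) e)" using y'c xc by simp
  ultimately obtain w where w: "w \<in> carrier_vec (dI a b e)" "y' - x = \<epsilon> j *\<^sub>v w" if "j = e" for j
    using ex0[OF an(2) dcy] by blast
  have dae: "dI a b e = 0" using ea by (simp add: dI_def)
  have "y' - x = 0\<^sub>v (rdim (I 0) e)"
    using w[of e] \<epsilon>c[OF an(2)] dae cols0_vec by (metis)
  then have y'x: "y' = x" using vec_diff_zero[OF y'c xc] by simp
  define m where "m = L' + c L'"
  have am: "a \<le> m" using cov'[of L'] a1 ea unfolding m_def by auto
  have mb': "m \<le> b" using mb unfolding m_def .
  have mn: "m < n" using mb' bn by simp
  have rel: "pathmat (I 0) L' (c L') = 0\<^sub>m (rdim (I 0) m) (rdim (I 0) L')"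
    using V0 an mn unfolding valid_rep_def m_def by auto
  have padd: "pathmat (I 0) L' ((e - L') + (m - e)) = pathmat (I 0) e (m - e) * P0"
    using pathmat_add[OF V0, of L' "e - L'" "m - e"] Le ea am mn unfolding P0_def by simp
  have em': "(e - L') + (m - e) = c L'" using Le ea am unfolding m_def by simp
  have Pem: "pathmat (I 0) e (m - e) \<in> carrier_mat (rdim (I 0) m) (rdim (I 0) e)"
    using pathmat_carrier[OF V0, of e "m - e"] ea am mn by simp
  have "pathmat (I 0) e (m - e) *\<^sub>v (\<phi> e *\<^sub>v u1) = pathmat (I 0) e (m - e) *\<^sub>v y'"
    using y'x unfolding x_def by simp
  also have "\<dots> = (pathmat (I 0) e (m - e) * P0) *\<^sub>v y" unfolding y'_def using Pem P0c yc by simp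
  also have "\<dots> = 0\<^sub>v (rdim (I 0) m)" unfolding padd[symmetric] em' rel using yc by (simp add: zero_mat_vec)
  finally show False using phi_nonzero[OF bn ea ab cov V0 em eh \<phi>h pe am mb'] by simp
qed



lemma rows0_vec: "A \<in> carrier_mat 0 k \<Longrightarrow> A *\<^sub>v w = (0\<^sub>v 0 :: 'k::field vec)"
  by (rule eq_vecI) auto

lemma reverse_dir:
  assumes bn: "b < n" and ea: "e < a" and ab: "a \<le> b"
    and cov: "\<And>i. e \<le> i \<Longrightarrow> i \<le> b \<Longrightarrow> b < i + c i"
    and tight: "0 < e \<Longrightarrow> e - 1 + c (e - 1) \<le> a - 1"
  shows "injdim_le n c (interval_rep a b :: 'k::field rep) 1"
proof -
  define I :: "nat \<Rightarrow> 'k rep" where "I k = (if k = 0 then interval_rep e b else interval_rep e (a - 1))" for k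
  define \<epsilon> :: "nat \<Rightarrow> 'k mat" where "\<epsilon> j = ones (dI e b j) (dI a b j)" for j
  define \<delta> :: "nat \<Rightarrow> nat \<Rightarrow> 'k mat" where "\<delta> k j = ones (dI e (a - 1) j) (dI e b j)" for k j
  have a1: "e \<le> a - 1" "a - 1 < n" "a - 1 \<le> b" using ea ab bn by auto
  have injE: "injective_module n c (interval_rep e b :: 'k rep)"
    by (rule inj_IR[OF bn]) (use ea ab cov tight a1 in auto)
  have injC: "injective_module n c (interval_rep e (a - 1) :: 'k rep)"
  proof (rule inj_IR[OF a1(2) a1(1)])
    fix i assume "e \<le> i" "i \<le> a - 1"
    then show "a - 1 < i + c i" using cov[of i] ab ea
      by (metis a1(3) le_trans less_le_trans not_less order.strict_iff_not)
  next
    assume "0 < e" then show "e - 1 + c (e - 1) \<le> a - 1" by (rule tight)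
  qed
  have ex: "((k < 1 \<longrightarrow> \<delta> k j *\<^sub>v v = 0\<^sub>v (rdim (I (k + 1)) j)) \<longleftrightarrow>
            (if k = 0 then (\<exists>w \<in> carrier_vec (rdim (interval_rep a b :: 'k rep) j). v = \<epsilon> j *\<^sub>v w)
             else (\<exists>w \<in> carrier_vec (rdim (I (k - 1)) j). v = \<delta> (k - 1) j *\<^sub>v w)))"
    if k: "k \<le> 1" and v: "v \<in> carrier_vec (rdim (I k) j)" for k j v
  proof (cases "k = 0")
    case True
    have v': "v \<in> carrier_vec (dI e b j)" using v True by (simp add: I_def)
    show ?thesis
    proof (cases "e \<le> j \<and> j \<le> a - 1")
      case T1: True
      have d: "dI e b j = 1" "dI e (a - 1) j = 1" "dI a b j = 0" using T1 a1 ea by (auto simp: dI_def)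
      have "(\<delta> 0 j *\<^sub>v v = 0\<^sub>v 1) \<longleftrightarrow> v = 0\<^sub>v 1" using v' d by (simp add: \<delta>_def ones11_vec)
      moreover have "(\<exists>w \<in> carrier_vec 0. v = \<epsilon> j *\<^sub>v w) \<longleftrightarrow> v = 0\<^sub>v 1"
        using d cols0_vec[of "ones 1 0" 1] by (auto simp: \<epsilon>_def intro!: bexI[of _ "0\<^sub>v 0"])
      ultimately show ?thesis using True d by (simp add: I_def)
    next
      case F1: False
      show ?thesis
      proof (cases "a \<le> j \<and> j \<le> b")
        case T2: True
        have d: "dI e b j = 1" "dI e (a - 1) j = 0" "dI a b j = 1" using T2 ea by (auto simp: dI_def)
        have "\<delta> 0 j *\<^sub>v v = 0\<^sub>v 0" by (rule rows0_vec[of _ "dI e b j"]) (unfold \<delta>_def d, simp)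
        moreover have "\<exists>w \<in> carrier_vec 1. v = \<epsilon> j *\<^sub>v w"
          using v' d by (intro bexI[of _ v]) (auto simp: \<epsilon>_def ones11_vec)
        ultimately show ?thesis using True d by (simp add: I_def)
      next
        case F2: False
        have d: "dI e b j = 0" "dI e (a - 1) j = 0" "dI a b j = 0" using F1 F2 a1 ea
          by (auto simp: dI_def)
        have "\<delta> 0 j *\<^sub>v v = 0\<^sub>v 0" by (rule rows0_vec[of _ "dI e b j"]) (unfold \<delta>_def d, simp)
        moreover have "v = \<epsilon> j *\<^sub>v 0\<^sub>v 0"
        proof -
          have "\<epsilon> j *\<^sub>v 0\<^sub>v 0 = 0\<^sub>v 0" by (rule rows0_vec[of _ 0]) (unfold \<epsilon>_def d, simp)
          then show ?thesis using v' d vec0_eq[of v] by simp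
        qed
        ultimately show ?thesis using True d by (auto simp: I_def)
      qed
    qed
  next
    case False
    then have k1: "k = 1" using k by simp
    have v': "v \<in> carrier_vec (dI e (a - 1) j)" using v k1 by (simp add: I_def)
    have "\<exists>w \<in> carrier_vec (dI e b j). v = \<delta> 0 j *\<^sub>v w"
    proof (cases "e \<le> j \<and> j \<le> a - 1")
      case True
      have d: "dI e b j = 1" "dI e (a - 1) j = 1" using True a1 by (auto simp: dI_def)
      show ?thesis using v' d by (intro bexI[of _ v]) (auto simp: \<delta>_def ones11_vec)
    next
      case False
      have d: "dI e (a - 1) j = 0" using False by (simp add: dI_def)
      show ?thesis using v' d vec0_eq[of v]
        by (intro bexI[of _ "0\<^sub>v (dI e b j)"]) (auto simp: \<delta>_def rows0_vec)
    qed
    then show ?thesis using k1 by (simp add: I_def)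
  qed
  show ?thesis
    unfolding injdim_le_def
  proof (intro exI[of _ I] exI[of _ \<epsilon>] exI[of _ \<delta>] conjI allI impI ballI)
    fix k :: nat assume "k \<le> 1"
    then show "injective_module n c (I k)" using injE injC by (cases "k = 0") (auto simp: I_def)
  next
    show "is_hom n (interval_rep a b) (I 0) \<epsilon>" unfolding I_def \<epsilon>_def by simp (rule hom_IR, use ea in auto)
  next
    show "is_mono n (interval_rep a b) \<epsilon>" unfolding \<epsilon>_def by (rule ones_mono) (use ea in auto)
  next
    fix k :: nat assume "k < 1"
    then show "is_hom n (I k) (I (k + 1)) (\<delta> k)" unfolding I_def \<delta>_def by simp (rule hom_IR, use a1 in auto)
  next
    fix k j and v :: "'k vec" assume kk: "k \<le> 1" and "j < n" and vv: "v \<in> carrier_vec (rdim (I k) j)"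
    show "((k < 1 \<longrightarrow> \<delta> k j *\<^sub>v v = 0\<^sub>v (rdim (I (k + 1)) j)) \<longleftrightarrow>
            (if k = 0 then (\<exists>w \<in> carrier_vec (rdim (interval_rep a b :: 'k rep) j). v = \<epsilon> j *\<^sub>v w)
             else (\<exists>w \<in> carrier_vec (rdim (I (k - 1)) j). v = \<delta> (k - 1) j *\<^sub>v w)))"
      by (rule ex[OF kk vv])
  qed
qed



lemma mono_ic:
  assumes K: "kupisch_linear n c" and ii: "i \<le> i'" and i'n: "i' < n"
  shows "i + c i \<le> i' + c i'"
  using ii i'n
proof (induction i' rule: dec_induct)
  case base then show ?case by simp
next
  case (step k)
  then have "c k \<le> c (k + 1) + 1" using K unfolding kupisch_linear_def by auto
  moreover have "i + c i \<le> k + c k" using step by simp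
  ultimately show ?case by simp
qed

lemma c_pos:
  assumes K: "kupisch_linear n c" and jn: "j < n"
  shows "j < j + c j"
proof (cases "j + 1 < n")
  case True then show ?thesis using K unfolding kupisch_linear_def by auto
next
  case False then have "j = n - 1" using jn by auto
  then show ?thesis using K unfolding kupisch_linear_def by auto
qed

definition Lf :: "(nat \<Rightarrow> nat) \<Rightarrow> nat \<Rightarrow> nat" where
  "Lf c j = (LEAST i. j < i + c i)"

lemma L_props:
  assumes K: "kupisch_linear n c" and jn: "j < n"
  shows "Lf c j \<le> j" "j < Lf c j + c (Lf c j)"
    "\<And>i. Lf c j \<le> i \<Longrightarrow> i \<le> j \<Longrightarrow> j < i + c i"
    "\<And>i. i < Lf c j \<Longrightarrow> i + c i \<le> j"
    "dual_dim c j = j + 1 - Lf c j"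
proof -
  have jj: "j < j + c j" by (rule c_pos[OF K jn])
  show L1: "Lf c j \<le> j" unfolding Lf_def by (rule Least_le) (rule jj)
  show L2: "j < Lf c j + c (Lf c j)" unfolding Lf_def by (rule LeastI) (rule jj)
  show L3: "\<And>i. Lf c j \<le> i \<Longrightarrow> i \<le> j \<Longrightarrow> j < i + c i"
  proof -
    fix i assume "Lf c j \<le> i" "i \<le> j"
    then have "Lf c j + c (Lf c j) \<le> i + c i" using mono_ic[OF K] jn by auto
    then show "j < i + c i" using L2 by simp
  qed
  show L4: "\<And>i. i < Lf c j \<Longrightarrow> i + c i \<le> j"
  proof -
    fix i assume "i < Lf c j"
    then have "\<not> j < i + c i" unfolding Lf_def by (rule not_less_Least)
    then show "i + c i \<le> j" by simp
  qed
  have "{i. i \<le> j \<and> j < i + c i} = {Lf c j..j}"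
  proof (rule Set.set_eqI)
    fix i
    show "i \<in> {i. i \<le> j \<and> j < i + c i} \<longleftrightarrow> i \<in> {Lf c j..j}"
      using L3[of i] L4[of i] by (cases "i < Lf c j") auto
  qed
  then show "dual_dim c j = j + 1 - Lf c j" unfolding dual_dim_def by simp
qed

lemma core:
  fixes n :: nat and c :: "nat \<Rightarrow> nat" and s t :: nat
  assumes K: "kupisch_linear n c"
    and sn: "s + 2 \<le> n"
    and t1: "1 \<le> t" and tc: "t \<le> c s - 1"
  shows "(injdim_le n c (eJpow c s t :: 'k::field rep) 1 \<longleftrightarrow>
            int (dual_dim c (s + c s - 1)) - int (c s) + int t = int (dual_dim c (s + t - 1)))
       \<and> \<not> injdim_le n c (eJpow c s t :: 'k rep) 0"
proof -
  define b where "b = s + c s - 1"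
  define a where "a = s + t"
  have cs2: "2 \<le> c s" using K sn unfolding kupisch_linear_def by auto
  have "s + c s \<le> (n - 1) + c (n - 1)" using mono_ic[OF K, of s "n - 1"] sn by auto
  then have scs: "s + c s \<le> n" using K unfolding kupisch_linear_def by auto
  have bn: "b < n" using scs cs2 unfolding b_def by auto
  have ab: "a \<le> b" using tc cs2 unfolding a_def b_def by auto
  have M: "eJpow c s t = (interval_rep a b :: 'k rep)" unfolding eJpow_def a_def b_def by simp
  define e where "e = Lf c b"
  note Lb = L_props[OF K bn, folded e_def]
  have es: "e \<le> s" unfolding e_def Lf_def by (rule Least_le) (use cs2 b_def in auto)
  have ea: "e < a" using es t1 unfolding a_def by auto
  have a1n: "a - 1 < n" using ab bn by auto
  define L' where "L' = Lf c (a - 1)"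
  note La = L_props[OF K a1n, folded L'_def]
  have L'e: "L' \<le> e" unfolding L'_def Lf_def
    by (rule Least_le) (use Lb(2) ab ea in auto)
  have cov: "\<And>i. e \<le> i \<Longrightarrow> i \<le> b \<Longrightarrow> b < i + c i" by (rule Lb(3))
  have key: "injdim_le n c (interval_rep a b :: 'k rep) 1 \<longleftrightarrow> L' = e"
  proof
    assume inj: "injdim_le n c (interval_rep a b :: 'k rep) 1"
    show "L' = e"
    proof (rule ccontr)
      assume "L' \<noteq> e"
      then have Le: "L' < e" using L'e by simp
      have "\<not> injdim_le n c (interval_rep a b :: 'k rep) 1"
        by (rule forward_contra[OF bn ea ab cov Le La(3) Lb(4)[OF Le]])
      then show False using inj by simp
    qed
  next
    assume eq: "L' = e"
    show "injdim_le n c (interval_rep a b :: 'k rep) 1"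
    proof (rule reverse_dir[OF bn ea ab cov])
      assume "0 < e"
      then show "e - 1 + c (e - 1) \<le> a - 1" using La(4)[of "e - 1"] eq by simp
    qed
  qed
  have d1: "dual_dim c (s + c s - 1) = s + c s - e" using Lb(5) cs2 unfolding b_def by simp
  have d2: "dual_dim c (s + t - 1) = s + t - L'" using La(5) t1 unfolding a_def by simp
  have L'a: "L' \<le> s + t" using La(1) unfolding a_def by simp
  have arith: "int (dual_dim c (s + c s - 1)) - int (c s) + int t = int (dual_dim c (s + t - 1)) \<longleftrightarrow> L' = e"
    unfolding d1 d2 using es L'a by (auto simp: of_nat_diff)
  show ?thesis unfolding M using key arith not_injdim0[OF bn ea ab cov] by simp
qed

theorem mainTheorem7:
  fixes n :: nat and c :: "nat \<Rightarrow> nat" and s t :: nat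
  assumes "kupisch_linear n c"
    and "s + 2 \<le> n"
    and "1 \<le> t" and "t \<le> c s - 1"
  shows "(injdim_le n c (eJpow c s t :: 'k::field rep) 1 \<longleftrightarrow>
            int (dual_dim c (s + c s - 1)) - int (c s) + int t = int (dual_dim c (s + t - 1)))
       \<and> (injdim_le n c (eJpow c s t :: 'k::field rep) 1 \<longrightarrow>
            \<not> injdim_le n c (eJpow c s t :: 'k rep) 0)
       \<and> (injdim_le n c (eJpow c s 1 :: 'k rep) 1 \<longleftrightarrow>
            int (dual_dim c (s + c s - 1)) - int (c s) + 1 = int (dual_dim c s))"
proof -
  have c1: "1 \<le> c s - 1" using assms unfolding kupisch_linear_def by auto
  note A = core[OF assms, where 'k='k]
  note B = core[OF assms(1,2) order_refl c1, where 'k='k]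
  show ?thesis using A B by simp
qed

end
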